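(* Let $r\in(1,2)$ and let $c_r$ be a constant such that $|e^{-x}-1+x|\le c_r|x|^r$ for all $x>0$. Let $Z$ be a nonnegative real random variable with $\mathbb{E}[Z^r]<+\infty$, and let $k_Z(\xi)=\log\mathbb{E}[e^{-\xi Z}]$. Then for $0\le\xi\le(2\mathbb{E}[Z])^{-1}$, $$|k_Z(\xi)+\xi\mathbb{E}[Z]|\le c_r\xi^r\mathbb{E}[Z^r]+\xi^2(\mathbb{E}[Z])^2.$$ Moreover $$\sup_{\xi>0}\frac{|k_Z(\xi)|^r}{|\xi|^r}=\mathbb{E}[Z]^r.$$ *)

theory Defs
  imports "HOL-Probability.Probability"
begin

definition log_laplace :: "'a measure \<Rightarrow> ('a \<Rightarrow> real) \<Rightarrow> real \<Rightarrow> real" where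
  "log_laplace M Z \<xi> = ln (integral\<^sup>L M (\<lambda>\<omega>. exp (- \<xi> * Z \<omega>)))"

end

theory Submission
  imports Defs
begin

lemma ln_lower: fixes u :: real assumes "0 \<le> u" "u \<le> 1/2"
  shows "- u - u\<^sup>2 \<le> ln (1 - u)"
proof -
  let ?f = "\<lambda>x::real. ln (1 - x) + x + x\<^sup>2"
  have "?f 0 \<le> ?f u"
  proof (rule DERIV_nonneg_imp_increasing_open[OF assms(1)])
    fix x assume x: "0 < x" "x < u"
    show "\<exists>y. DERIV ?f x :> y \<and> y \<ge> 0"
    proof (intro exI conjI)
      show "DERIV ?f x :> (-1/(1-x) + 1 + 2*x)"
        using x assms by (auto intro!: derivative_eq_intros)
      have "-1/(1-x) + 1 + 2*x = x*(1-2*x)/(1-x)" using x assms by (simp add: field_simps power2_eq_square)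
      also have "\<dots> \<ge> 0" using x assms by (intro divide_nonneg_pos mult_nonneg_nonneg) auto
      finally show "-1/(1-x) + 1 + 2*x \<ge> 0" .
    qed
  next
    show "continuous_on {0..u} ?f" using assms by (auto intro!: continuous_intros)
  qed
  then show ?thesis by simp
qed

theorem lemmaA3:
  fixes M :: "'a measure" and Z :: "'a \<Rightarrow> real" and r c :: real
  assumes "prob_space M"
    and "1 < r" and "r < 2"
    and "\<forall>x::real. x > 0 \<longrightarrow> \<bar>exp (- x) - 1 + x\<bar> \<le> c * \<bar>x\<bar> powr r"
    and "Z \<in> borel_measurable M"
    and "\<forall>\<omega>\<in>space M. Z \<omega> \<ge> 0"
    and "integrable M (\<lambda>\<omega>. Z \<omega> powr r)"
  shows "(\<forall>\<xi>::real. 0 \<le> \<xi> \<and> 2 * integral\<^sup>L M Z * \<xi> \<le> 1 \<longrightarrow>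
           \<bar>log_laplace M Z \<xi> + \<xi> * integral\<^sup>L M Z\<bar>
             \<le> c * \<xi> powr r * integral\<^sup>L M (\<lambda>\<omega>. Z \<omega> powr r) + \<xi>\<^sup>2 * (integral\<^sup>L M Z)\<^sup>2)
       \<and> (SUP \<xi>\<in>{0::real<..}. \<bar>log_laplace M Z \<xi>\<bar> powr r / \<bar>\<xi>\<bar> powr r) = (integral\<^sup>L M Z) powr r"
proof -
  interpret prob_space M by fact
  note Zm = assms(5) and Zp = assms(6) and Zr = assms(7)
  define m where "m = integral\<^sup>L M Z"
  define P where "P = integral\<^sup>L M (\<lambda>\<omega>. Z \<omega> powr r)"
  define L where "L = (\<lambda>\<xi>. integral\<^sup>L M (\<lambda>\<omega>. exp (- \<xi> * Z \<omega>)))"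
  have intZ: "integrable M Z"
  proof (rule Bochner_Integration.integrable_bound[where f="\<lambda>\<omega>. 1 + Z \<omega> powr r"])
    show "integrable M (\<lambda>\<omega>. 1 + Z \<omega> powr r)" using Zr by simp
    show "Z \<in> borel_measurable M" by fact
    show "AE \<omega> in M. norm (Z \<omega>) \<le> norm (1 + Z \<omega> powr r)"
    proof (intro AE_I2)
      fix \<omega> assume w: "\<omega> \<in> space M"
      have z0: "Z \<omega> \<ge> 0" using Zp w by auto
      have "Z \<omega> \<le> 1 + Z \<omega> powr r"
      proof (cases "Z \<omega> \<le> 1")
        case True then show ?thesis by (smt (verit) powr_ge_zero)
      next
        case False
        then have "Z \<omega> powr 1 \<le> Z \<omega> powr r" using assms(2) by (intro powr_mono) auto
        then show ?thesis using False by simp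
      qed
      then show "norm (Z \<omega>) \<le> norm (1 + Z \<omega> powr r)" using z0 by simp
    qed
  qed
  have m0: "m \<ge> 0" unfolding m_def using Zp by (intro integral_nonneg_AE) auto
  have P0: "P \<ge> 0" unfolding P_def by (intro integral_nonneg_AE) auto
  have intE: "integrable M (\<lambda>\<omega>. exp (- \<xi> * Z \<omega>))" if "\<xi> \<ge> 0" for \<xi>
  proof (rule integrable_const_bound[where B=1])
    show "AE \<omega> in M. norm (exp (- \<xi> * Z \<omega>)) \<le> 1"
      using Zp that by (intro AE_I2) (auto simp: mult_nonneg_nonneg)
  qed (use Zm in simp)
  have L1: "L \<xi> \<le> 1" if "\<xi> \<ge> 0" for \<xi>
  proof -
    have "L \<xi> \<le> integral\<^sup>L M (\<lambda>_. 1)" unfolding L_def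
      using Zp that by (intro integral_mono_AE intE) (auto simp: mult_nonneg_nonneg)
    then show ?thesis by (simp add: prob_space)
  qed
  have Ljen: "exp (- \<xi> * m) \<le> L \<xi>" if "\<xi> \<ge> 0" for \<xi>
  proof -
    have "integral\<^sup>L M (\<lambda>\<omega>. exp (- \<xi> * m) * (1 - \<xi> * (Z \<omega> - m))) \<le> L \<xi>"
      unfolding L_def
    proof (intro integral_mono intE that)
      show "integrable M (\<lambda>\<omega>. exp (- \<xi> * m) * (1 - \<xi> * (Z \<omega> - m)))" using intZ by simp
      fix \<omega>
      have "1 + (- \<xi> * (Z \<omega> - m)) \<le> exp (- \<xi> * (Z \<omega> - m))" by (rule exp_ge_add_one_self)
      then have "exp (- \<xi> * m) * (1 - \<xi> * (Z \<omega> - m)) \<le> exp (- \<xi> * m) * exp (- \<xi> * (Z \<omega> - m))"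
        by (intro mult_left_mono) auto
      also have "\<dots> = exp (- \<xi> * Z \<omega>)" by (simp add: exp_add[symmetric] algebra_simps)
      finally show "exp (- \<xi> * m) * (1 - \<xi> * (Z \<omega> - m)) \<le> exp (- \<xi> * Z \<omega>)" .
    qed
    also have "integral\<^sup>L M (\<lambda>\<omega>. exp (- \<xi> * m) * (1 - \<xi> * (Z \<omega> - m))) = exp (- \<xi> * m)"
      using intZ by (simp add: m_def algebra_simps prob_space)
    finally show ?thesis by simp
  qed
  have Lpos: "L \<xi> > 0" if "\<xi> \<ge> 0" for \<xi> using Ljen[OF that] by (smt (verit) exp_gt_zero)
  have absk: "\<bar>ln (L \<xi>)\<bar> \<le> \<xi> * m" if "\<xi> \<ge> 0" for \<xi>
  proof -
    have "ln (L \<xi>) \<le> 0" using L1[OF that] Lpos[OF that] by simp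
    moreover have "- \<xi> * m \<le> ln (L \<xi>)" using Ljen[OF that] Lpos[OF that]
      by (metis ln_exp ln_le_cancel_iff exp_gt_zero)
    ultimately show ?thesis by simp
  qed
  have part1: "\<bar>ln (L \<xi>) + \<xi> * m\<bar> \<le> c * \<xi> powr r * P + \<xi>\<^sup>2 * m\<^sup>2"
    if x0: "0 \<le> \<xi>" and x1: "2 * m * \<xi> \<le> 1" for \<xi>
  proof -
    define R where "R = L \<xi> - 1 + \<xi> * m"
    have Req: "R = integral\<^sup>L M (\<lambda>\<omega>. exp (- \<xi> * Z \<omega>) - 1 + \<xi> * Z \<omega>)"
      unfolding R_def L_def m_def using intE[OF x0] intZ by (simp add: prob_space)
    have pt: "0 \<le> exp (- \<xi> * Z \<omega>) - 1 + \<xi> * Z \<omega> \<and>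
              exp (- \<xi> * Z \<omega>) - 1 + \<xi> * Z \<omega> \<le> c * \<xi> powr r * Z \<omega> powr r"
      if w: "\<omega> \<in> space M" for \<omega>
    proof
      show "0 \<le> exp (- \<xi> * Z \<omega>) - 1 + \<xi> * Z \<omega>"
        using exp_ge_add_one_self[of "- \<xi> * Z \<omega>"] by simp
      have z0: "Z \<omega> \<ge> 0" using Zp w by auto
      show "exp (- \<xi> * Z \<omega>) - 1 + \<xi> * Z \<omega> \<le> c * \<xi> powr r * Z \<omega> powr r"
      proof (cases "\<xi> * Z \<omega> > 0")
        case True
        then have "\<bar>exp (- (\<xi> * Z \<omega>)) - 1 + \<xi> * Z \<omega>\<bar> \<le> c * \<bar>\<xi> * Z \<omega>\<bar> powr r"
          using assms(4) by blast
        also have "\<bar>\<xi> * Z \<omega>\<bar> powr r = \<xi> powr r * Z \<omega> powr r"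
          using x0 z0 by (simp add: powr_mult)
        finally show ?thesis by (simp add: mult.assoc)
      next
        case False
        then have "\<xi> = 0 \<or> Z \<omega> = 0" using x0 z0 by (metis mult_pos_pos order.order_iff_strict)
        then show ?thesis using assms(2) by auto
      qed
    qed
    have R0: "0 \<le> R" unfolding Req using pt by (intro integral_nonneg_AE AE_I2) auto
    have R1: "R \<le> c * \<xi> powr r * P" unfolding Req P_def
    proof -
      have "integral\<^sup>L M (\<lambda>\<omega>. exp (- \<xi> * Z \<omega>) - 1 + \<xi> * Z \<omega>)
            \<le> integral\<^sup>L M (\<lambda>\<omega>. c * \<xi> powr r * Z \<omega> powr r)"
        using pt intE[OF x0] intZ Zr by (intro integral_mono_AE AE_I2) auto
      then show "integral\<^sup>L M (\<lambda>\<omega>. exp (- \<xi> * Z \<omega>) - 1 + \<xi> * Z \<omega>)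
            \<le> c * \<xi> powr r * integral\<^sup>L M (\<lambda>\<omega>. Z \<omega> powr r)" by simp
    qed
    define u where "u = \<xi> * m"
    have u0: "0 \<le> u" "u \<le> 1/2" using x0 x1 m0 by (auto simp: u_def mult_nonneg_nonneg mult_ac)
    have Lu: "L \<xi> = 1 - u + R" unfolding R_def u_def by simp
    have up: "ln (L \<xi>) + u \<le> R" using ln_le_minus_one[OF Lpos[OF x0]] Lu by simp
    have "ln (1 - u) \<le> ln (L \<xi>)" using Lu R0 u0 by simp
    then have lo: "- u\<^sup>2 \<le> ln (L \<xi>) + u" using ln_lower[OF u0] by simp
    have "\<bar>ln (L \<xi>) + u\<bar> \<le> R + u\<^sup>2" using up lo R0 by (simp add: abs_le_iff) (smt (verit) zero_le_power2)
    also have "\<dots> \<le> c * \<xi> powr r * P + \<xi>\<^sup>2 * m\<^sup>2" using R1 by (simp add: u_def power_mult_distrib)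
    finally show ?thesis by (simp add: u_def)
  qed
  define g where "g = (\<lambda>\<xi>::real. \<bar>ln (L \<xi>)\<bar> powr r / \<bar>\<xi>\<bar> powr r)"
  have gle: "g \<xi> \<le> m powr r" if "\<xi> > 0" for \<xi>
  proof -
    have "\<bar>ln (L \<xi>)\<bar> powr r \<le> (\<xi> * m) powr r"
      using absk[of \<xi>] that assms(2) by (intro powr_mono2) auto
    also have "\<dots> = \<xi> powr r * m powr r" using that m0 by (simp add: powr_mult)
    finally show ?thesis unfolding g_def using that
      by (simp add: divide_le_eq mult.commute)
  qed
  have bdd: "bdd_above (g ` {0<..})" using gle by (intro bdd_aboveI2) auto
  have Sle: "(SUP \<xi>\<in>{0<..}. g \<xi>) \<le> m powr r"
    using gle by (intro cSUP_least) auto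
  have Sge: "m powr r \<le> (SUP \<xi>\<in>{0<..}. g \<xi>)"
  proof (cases "m = 0")
    case True
    have "g 1 \<le> (SUP \<xi>\<in>{0<..}. g \<xi>)" using bdd by (intro cSUP_upper) auto
    moreover have "g 1 \<ge> 0" unfolding g_def by simp
    ultimately show ?thesis using True by simp
  next
    case False
    then have mpos: "m > 0" using m0 by simp
    define h where "h = (\<lambda>\<xi>::real. \<bar>ln (L \<xi>)\<bar> / \<xi>)"
    have ev: "eventually (\<lambda>\<xi>. \<xi> \<in> {0<..<1/(2*m)}) (at_right (0::real))"
      using mpos by (intro eventually_at_right_real) simp
    have hlo: "eventually (\<lambda>\<xi>. m - c * \<xi> powr (r - 1) * P - \<xi> * m\<^sup>2 \<le> h \<xi>) (at_right 0)"
      using ev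
    proof eventually_elim
      case (elim \<xi>)
      then have x0: "\<xi> > 0" and x1: "2 * m * \<xi> \<le> 1" using mpos by (auto simp: field_simps)
      have "- ln (L \<xi>) \<ge> \<xi> * m - (c * \<xi> powr r * P + \<xi>\<^sup>2 * m\<^sup>2)"
        using part1[OF _ x1] x0 by (simp add: abs_le_iff)
      then have "\<bar>ln (L \<xi>)\<bar> \<ge> \<xi> * m - (c * \<xi> powr r * P + \<xi>\<^sup>2 * m\<^sup>2)" by linarith
      then have "h \<xi> \<ge> (\<xi> * m - (c * \<xi> powr r * P + \<xi>\<^sup>2 * m\<^sup>2)) / \<xi>"
        unfolding h_def using x0 by (intro divide_right_mono) auto
      also have "(\<xi> * m - (c * \<xi> powr r * P + \<xi>\<^sup>2 * m\<^sup>2)) / \<xi>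
               = m - c * (\<xi> powr r / \<xi>) * P - \<xi> * m\<^sup>2"
        using x0 by (simp add: field_simps power2_eq_square)
      also have "\<xi> powr r / \<xi> = \<xi> powr (r - 1)" using x0 by (simp add: powr_diff)
      finally show ?case .
    qed
    have hhi: "eventually (\<lambda>\<xi>. h \<xi> \<le> m) (at_right 0)"
      using ev
    proof eventually_elim
      case (elim \<xi>)
      then show ?case unfolding h_def using absk[of \<xi>] by (simp add: divide_le_eq mult.commute)
    qed
    have lim0: "((\<lambda>\<xi>::real. \<xi> powr (r - 1)) \<longlongrightarrow> 0) (at_right 0)"
      using assms(2) by (intro tendsto_zero_powrI) (auto intro!: tendsto_ident_at eventually_at_rightI[of 0 1])
    have limlo: "((\<lambda>\<xi>::real. m - c * \<xi> powr (r - 1) * P - \<xi> * m\<^sup>2) \<longlongrightarrow> m) (at_right 0)"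
    proof -
      have "((\<lambda>\<xi>::real. m - c * \<xi> powr (r - 1) * P - \<xi> * m\<^sup>2) \<longlongrightarrow> m - c * 0 * P - 0 * m\<^sup>2) (at_right 0)"
        by (intro tendsto_intros lim0 tendsto_ident_at)
      then show ?thesis by simp
    qed
    have limh: "(h \<longlongrightarrow> m) (at_right 0)"
      by (rule tendsto_sandwich[OF hlo hhi limlo tendsto_const])
    have limg: "((\<lambda>\<xi>. h \<xi> powr r) \<longlongrightarrow> m powr r) (at_right 0)"
      by (rule tendsto_powr[OF limh tendsto_const]) (use mpos in simp)
    show ?thesis
    proof (rule tendsto_upperbound[OF limg])
      show "\<forall>\<^sub>F \<xi> in at_right 0. h \<xi> powr r \<le> (SUP \<xi>\<in>{0<..}. g \<xi>)"
        using ev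
      proof eventually_elim
        case (elim \<xi>)
        then have x0: "\<xi> > 0" by simp
        have "h \<xi> powr r = g \<xi>" unfolding h_def g_def using x0 by (simp add: powr_divide)
        also have "\<dots> \<le> (SUP \<xi>\<in>{0<..}. g \<xi>)" using bdd x0 by (intro cSUP_upper) auto
        finally show ?case .
      qed
    qed simp
  qed
  have A: "\<forall>\<xi>. 0 \<le> \<xi> \<and> 2 * m * \<xi> \<le> 1 \<longrightarrow> \<bar>ln (L \<xi>) + \<xi> * m\<bar> \<le> c * \<xi> powr r * P + \<xi>\<^sup>2 * m\<^sup>2"
    using part1 by blast
  have B: "(SUP \<xi>\<in>{0<..}. g \<xi>) = m powr r" using Sle Sge by linarith
  show ?thesis using A B unfolding g_def L_def m_def P_def log_laplace_def by (rule conjI)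
qed

end
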